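(* Let $a,c\in\mathbb{C}$ with $c\notin\{0,-1,-2,\dots\}$. Then for all $x\in\mathbb{C}$, $$\phi_2(a,a;c;x,-x)={}_1F_2\!\left[\begin{array}{c}a\\ \tfrac12 c,\ \tfrac12 c+\tfrac12\end{array};\frac{x^2}{4}\right]=\sum_{k=0}^\infty\frac{(a)_k}{(\tfrac12 c)_k(\tfrac12 c+\tfrac12)_k}\frac{(x^2/4)^k}{k!}.$$ In particular, if $2a\notin\{0,-1,-2,\dots\}$, then $$\phi_2(a,a;2a;x,-x)={}_0F_1\!\left[\begin{array}{c}-\\ a+\tfrac12\end{array};\frac{x^2}{4}\right]=\sum_{k=0}^\infty\frac{1}{(a+\tfrac12)_k}\frac{(x^2/4)^k}{k!}.$$
   Context: $(\lambda)_n=\Gamma(\lambda+n)/\Gamma(\lambda)$ denotes the Pochhammer symbol. Humbert's function $\phi_2$ is defined by $$\phi_2(a,b;c;x,y)=\sum_{n=0}^\infty\sum_{k=0}^\infty\frac{(a)_n(b)_k}{(c)_{n+k}}\frac{x^n y^k}{n!\,k!},$$ convergent for all $x,y\in\mathbb{C}$ when $c\notin\{0,-1,-2,\dots\}$. *)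

theory Defs
  imports "HOL-Analysis.Analysis"
begin

definition phi2_term :: "complex \<Rightarrow> complex \<Rightarrow> complex \<Rightarrow> complex \<Rightarrow> complex \<Rightarrow> nat \<times> nat \<Rightarrow> complex" where
  "phi2_term a b c x y = (\<lambda>(n, k). pochhammer a n * pochhammer b k / pochhammer c (n + k)
      * x ^ n * y ^ k / (fact n * fact k))"

definition phi2 :: "complex \<Rightarrow> complex \<Rightarrow> complex \<Rightarrow> complex \<Rightarrow> complex \<Rightarrow> complex" where
  "phi2 a b c x y = infsum (phi2_term a b c x y) UNIV"

definition hyp1F2_term :: "complex \<Rightarrow> complex \<Rightarrow> complex \<Rightarrow> complex \<Rightarrow> nat \<Rightarrow> complex" where
  "hyp1F2_term a b1 b2 z k = pochhammer a k / (pochhammer b1 k * pochhammer b2 k) * z ^ k / fact k"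

definition hyp0F1_term :: "complex \<Rightarrow> complex \<Rightarrow> nat \<Rightarrow> complex" where
  "hyp0F1_term b z k = 1 / pochhammer b k * z ^ k / fact k"

end

theory Submission
  imports Defs "HOL-Computational_Algebra.Formal_Power_Series"
begin


lemma ode_aux1:
  fixes u :: "nat \<Rightarrow> complex"
  assumes "\<And>n. of_nat (Suc n) * u (Suc n) = (a + of_nat n) * u n"
  shows "(1 - fps_X) * fps_deriv (Abs_fps u) = fps_const a * Abs_fps u"
proof (rule fps_ext)
  fix n
  show "fps_nth ((1 - fps_X) * fps_deriv (Abs_fps u)) n = fps_nth (fps_const a * Abs_fps u) n"
  proof (cases n)
    case 0 then show ?thesis using assms[of 0] by (simp add: mult.commute)
  next
    case (Suc k) then show ?thesis using assms[of "Suc k"] assms[of k]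
      by (simp add: algebra_simps)
  qed
qed

lemma ode_aux2:
  fixes u :: "nat \<Rightarrow> complex"
  assumes "\<And>n. of_nat (Suc n) * u (Suc n) = - (a + of_nat n) * u n"
  shows "(1 + fps_X) * fps_deriv (Abs_fps u) = - fps_const a * Abs_fps u"
proof (rule fps_ext)
  fix n
  show "fps_nth ((1 + fps_X) * fps_deriv (Abs_fps u)) n = fps_nth (- fps_const a * Abs_fps u) n"
  proof (cases n)
    case 0 then show ?thesis using assms[of 0] by (simp add: mult.commute)
  next
    case (Suc k)
    have h: "of_nat (Suc (Suc k)) * u (Suc (Suc k)) = - (a + of_nat (Suc k)) * u (Suc k)" by (rule assms)
    have "fps_nth ((1 + fps_X) * fps_deriv (Abs_fps u)) n = of_nat (Suc (Suc k)) * u (Suc (Suc k)) + of_nat (Suc k) * u (Suc k)"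
      using Suc by (simp add: algebra_simps del: of_nat_Suc)
    also have "\<dots> = - a * u (Suc k)" unfolding h by (simp add: algebra_simps)
    finally show ?thesis using Suc by simp
  qed
qed

lemma inner_identity:
  fixes a :: complex
  defines "w \<equiv> \<lambda>N. \<Sum>i=0..N. (pochhammer a i / fact i) * ((-1)^(N-i) * pochhammer a (N-i) / fact (N-i))"
  shows "w (2*m) = pochhammer a m / fact m \<and> w (2*m+1) = 0"
proof -
  define U where "U = Abs_fps (\<lambda>n. pochhammer a n / fact n :: complex)"
  define V where "V = Abs_fps (\<lambda>n. (-1)^n * pochhammer a n / fact n :: complex)"
  define W where "W = U * V"
  have wW: "w n = fps_nth W n" for n by (simp add: w_def W_def U_def V_def fps_mult_nth)
  have uS: "of_nat (Suc n) * (pochhammer a (Suc n) / fact (Suc n)) = (a + of_nat n) * (pochhammer a n / fact n)" for n :: nat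
    by (simp add: pochhammer_Suc field_simps del: of_nat_Suc)
  have fU: "(1 - fps_X) * fps_deriv U = fps_const a * U"
    unfolding U_def by (rule ode_aux1) (rule uS)
  have fV: "(1 + fps_X) * fps_deriv V = - fps_const a * V"
    unfolding V_def
  proof (rule ode_aux2)
    fix n
    have "of_nat (Suc n) * ((-1)^(Suc n) * pochhammer a (Suc n) / fact (Suc n)) = - ((-1)^n) * (of_nat (Suc n) * (pochhammer a (Suc n) / fact (Suc n)))"
      by (simp only: power_Suc) (simp only: times_divide_eq_right mult_minus_left mult_1 mult_minus_right ac_simps)
    also have "\<dots> = - (a + of_nat n) * ((-1)^n * pochhammer a n / fact n)" unfolding uS by (simp add: algebra_simps)
    finally show "of_nat (Suc n) * ((-1)^(Suc n) * pochhammer a (Suc n) / fact (Suc n)) = - (a + of_nat n) * ((-1)^n * pochhammer a n / fact n)" .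
  qed
  have "(1 - fps_X^2) * fps_deriv W = (1+fps_X)*V*((1 - fps_X) * fps_deriv U) + (1-fps_X)*U*((1 + fps_X) * fps_deriv V)"
    by (simp add: W_def algebra_simps power2_eq_square)
  also have "\<dots> = fps_const (2*a) * fps_X * W"
  proof -
    have c2: "fps_const (2*a) = 2 * fps_const a"
      by (metis fps_const_add mult_2)
    show ?thesis unfolding fU fV W_def c2 by (simp add: algebra_simps del: fps_const_neg)
  qed
  finally have ode: "(1 - fps_X^2) * fps_deriv W = fps_const (2*a) * fps_X * W" .
  have w1: "fps_nth W 1 = 0"
    using arg_cong[OF ode, of "\<lambda>F. fps_nth F 0"] by (simp add: algebra_simps fps_X_power_mult_nth)
  have rec: "of_nat (m+2) * fps_nth W (m+2) = (2*a + of_nat m) * fps_nth W m" for m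
  proof -
    have "fps_nth ((1 - fps_X^2) * fps_deriv W) (m+1) = fps_nth (fps_const (2*a) * fps_X * W) (m+1)"
      using ode by simp
    moreover have "fps_nth (fps_X^2 * fps_deriv W) (m+1) = of_nat m * fps_nth W m"
      by (cases m) (simp_all add: fps_X_power_mult_nth)
    moreover have "fps_nth ((1 - fps_X^2) * fps_deriv W) (m+1) = fps_nth (fps_deriv W) (m+1) - fps_nth (fps_X^2 * fps_deriv W) (m+1)"
      by (simp only: left_diff_distrib fps_sub_nth mult_1)
    moreover have "fps_nth (fps_const (2*a) * fps_X * W) (m+1) = 2*a * fps_nth W m"
      by (simp only: mult.assoc fps_mult_left_const_nth fps_X_mult_nth) simp
    ultimately show ?thesis
      by (simp add: algebra_simps)
  qed
  show ?thesis
  proof (induction m)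
    case 0
    then show ?case using w1 by (simp add: wW W_def U_def V_def)
  next
    case (Suc m)
    have e1: "fps_nth W (2*m+2) = (2*a + of_nat (2*m)) * fps_nth W (2*m) / of_nat (2*m+2)"
    proof -
      have nz: "(of_nat (2*m+2)::complex) \<noteq> 0" by (simp only: of_nat_eq_0_iff)
      show ?thesis using rec[of "2*m"] nz by (metis nonzero_eq_divide_eq mult.commute)
    qed
    have e2: "fps_nth W (2*m+3) = (2*a + of_nat (2*m+1)) * fps_nth W (2*m+1) / of_nat (2*m+3)"
    proof -
      have nz: "(of_nat (2*m+3)::complex) \<noteq> 0" by (simp only: of_nat_eq_0_iff)
      have "2*m+1+2 = 2*m+3" by simp
      then show ?thesis using rec[of "2*m+1"] nz by (metis nonzero_eq_divide_eq mult.commute)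
    qed
    have "fps_nth W (2*Suc m) = pochhammer a (Suc m) / fact (Suc m)"
    proof -
      have "fps_nth W (2*Suc m) = (2*a + of_nat (2*m)) * (pochhammer a m / fact m) / of_nat (2*m+2)"
        using Suc e1 by (simp add: wW)
      also have "\<dots> = pochhammer a (Suc m) / fact (Suc m)"
      proof -
        have nz: "(1 + of_nat m::complex) \<noteq> 0" using of_nat_neq_0[of m] by (simp add: add.commute)
        have "(fact m::complex) \<noteq> 0" by simp
        have nz2: "(of_nat m + 1::complex) \<noteq> 0" using nz by (simp add: add.commute)
        have "(2*a + of_nat (2*m)) * (pochhammer a m / fact m) / of_nat (2*m+2)
              = (2*(a + of_nat m)) * (pochhammer a m / fact m) / (2*(of_nat m + 1))"
          by (simp only: of_nat_mult of_nat_add of_nat_numeral distrib_left mult_1_right)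
        also have "\<dots> = (a + of_nat m) * (pochhammer a m / fact m) / (of_nat m + 1)"
          by (subst mult.assoc, rule mult_divide_mult_cancel_left) simp
        also have "\<dots> = pochhammer a (Suc m) / fact (Suc m)"
          using nz2 \<open>(fact m::complex) \<noteq> 0\<close> by (simp add: pochhammer_Suc field_simps)
        finally show ?thesis .
      qed
      finally show ?thesis .
    qed
    moreover have "fps_nth W (2*Suc m+1) = 0"
    proof -
      have "2*Suc m+1 = 2*m+3" by simp
      then show ?thesis using Suc e2 by (simp add: wW eval_nat_numeral)
    qed
    ultimately show ?case by (simp add: wW)
  qed
qed



lemma pochhammer_nonneg': "0 \<le> (x::real) \<Longrightarrow> 0 \<le> pochhammer x n"
  by (induction n) (auto simp: pochhammer_Suc)

lemma norm_pochhammer_le: "norm (pochhammer (z::complex) n) \<le> pochhammer (norm z) n"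
proof (induction n)
  case 0 then show ?case by simp
next
  case (Suc n)
  have "norm (z + of_nat n) \<le> norm z + of_nat n"
    using norm_triangle_ineq[of z "of_nat n"] by simp
  then show ?case using Suc
    by (simp add: pochhammer_Suc norm_mult mult_mono pochhammer_nonneg')
qed

lemma pochhammer_mono_base:
  fixes x y :: real
  assumes "0 \<le> x" "x \<le> y"
  shows "pochhammer x n \<le> pochhammer y n"
proof (induction n)
  case 0 then show ?case by simp
next
  case (Suc n)
  have "0 \<le> pochhammer x n" using assms
    by (induction n) (auto simp: pochhammer_Suc)
  then show ?case using Suc assms
    by (simp add: pochhammer_Suc mult_mono)
qed

lemma pochhammer_mult_le:
  fixes A :: real
  assumes "0 \<le> A"
  shows "pochhammer A n * pochhammer A k \<le> pochhammer A (n + k)"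
proof -
  have "0 \<le> pochhammer A n" using assms by (induction n) (auto simp: pochhammer_Suc)
  moreover have "pochhammer A k \<le> pochhammer (A + of_nat n) k"
    using assms by (intro pochhammer_mono_base) auto
  ultimately show ?thesis by (simp add: pochhammer_product' mult_left_mono)
qed

lemma term_bound:
  fixes a c x :: complex
  shows "norm (phi2_term a a c x (-x) (n,k)) \<le>
    pochhammer (max (norm a) 1) (n+k) * of_nat ((n+k) choose n) * norm x^(n+k) / (fact (n+k) * norm (pochhammer c (n+k)))"
proof -
  define A where "A = max (norm a) 1"
  define X where "X = norm x"
  define P where "P = norm (pochhammer c (n+k))"
  have e: "norm (phi2_term a a c x (-x) (n,k)) = (norm (pochhammer a n) * norm (pochhammer a k)) * (X^(n+k) / (fact n * fact k * P))"
    by (simp add: phi2_term_def norm_mult norm_divide norm_power power_add X_def P_def divide_inverse inverse_mult_distrib mult_ac norm_inverse norm_fact)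
  have "norm (pochhammer a n) \<le> pochhammer A n"
    using norm_pochhammer_le[of a n] pochhammer_mono_base[of "norm a" A n] by (simp add: A_def)
  moreover have "norm (pochhammer a k) \<le> pochhammer A k"
    using norm_pochhammer_le[of a k] pochhammer_mono_base[of "norm a" A k] by (simp add: A_def)
  ultimately have "norm (pochhammer a n) * norm (pochhammer a k) \<le> pochhammer A n * pochhammer A k"
    by (intro mult_mono) (auto simp: A_def pochhammer_nonneg')
  also have "\<dots> \<le> pochhammer A (n+k)" by (rule pochhammer_mult_le) (simp add: A_def)
  finally have 1: "norm (pochhammer a n) * norm (pochhammer a k) \<le> pochhammer A (n+k)" .
  have nn: "0 \<le> X^(n+k) / (fact n * fact k * P)" by (simp add: X_def P_def)
  have 2: "X^(n+k) / (fact n * fact k * P) = of_nat ((n+k) choose n) * X^(n+k) / (fact (n+k) * P)"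
  proof -
    define C where "C = (of_nat ((n+k) choose n) :: real)"
    have Cnz: "C \<noteq> 0" by (simp add: C_def)
    have "of_nat ((n+k) choose n) * X^(n+k) / (fact (n+k) * P) = C * X^(n+k) / (C * (fact n * fact k * P))"
      using binomial_fact[of n "n+k", where 'a=real] by (simp add: C_def field_simps)
    also have "\<dots> = X^(n+k) / (fact n * fact k * P)" using Cnz by simp
    finally show ?thesis by simp
  qed
  show ?thesis
    using mult_right_mono[OF 1 nn] unfolding e 2 by (simp add: A_def X_def P_def mult_ac)
qed

lemma bound_summable:
  fixes c :: complex and A X :: real
  assumes c_ok: "\<forall>m::nat. c \<noteq> - of_nat m" and A: "0 \<le> A" and X: "0 \<le> X"
  shows "summable (\<lambda>N. pochhammer A N * (2*X)^N / (fact N * norm (pochhammer c N)))"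
proof -
  define b where "b = (\<lambda>N. pochhammer A N * (2*X)^N / (fact N * norm (pochhammer c N)))"
  define N0 where "N0 = nat \<lceil>norm c + 4*X*(A+1) + 1\<rceil>"
  have bnn: "0 \<le> b N" for N by (simp add: b_def pochhammer_nonneg' A X)
  have step: "b (Suc N) \<le> 1/2 * b N" if "N \<ge> N0" for N
  proof -
    define r where "r = (A + of_nat N) * (2*X) / ((of_nat N + 1) * norm (c + of_nat N))"
    have eq: "b (Suc N) = b N * r"
      by (simp add: b_def r_def pochhammer_Suc norm_mult divide_inverse inverse_mult_distrib mult_ac) (simp add: algebra_simps)
    have NN: "real N \<ge> norm c + 4*X*(A+1) + 1" using that unfolding N0_def by linarith
    have cn: "norm (c + of_nat N) \<ge> real N - norm c"
      using norm_triangle_ineq2[of "of_nat N" "-c"] by (simp add: add.commute norm_minus_commute)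
    have cpos: "norm (c + of_nat N) \<ge> 4*X*(A+1) + 1" using cn NN by linarith
    have dpos: "0 < (of_nat N + 1) * norm (c + of_nat N)"
    proof -
      have "0 \<le> 4*X*(A+1)" using X A by simp
      then have "0 < norm (c + of_nat N)" using cpos by linarith
      then show ?thesis by simp
    qed
    have "(real N + 1) * (A + 1) \<ge> A + real N" using A by (simp add: algebra_simps)
    then have "4*X*(A + real N) \<le> 4*X*((real N + 1) * (A + 1))" using X by (intro mult_left_mono) auto
    also have "\<dots> = (real N + 1) * (4*X*(A+1))" by (simp add: algebra_simps)
    also have "\<dots> \<le> (real N + 1) * norm (c + of_nat N)"
      using cpos by (intro mult_left_mono) auto
    finally have "(A + of_nat N) * (2*X) \<le> 1/2 * ((of_nat N + 1) * norm (c + of_nat N))"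
      by (simp add: algebra_simps)
    then have "r \<le> 1/2" unfolding r_def using dpos by (simp add: pos_divide_le_eq)
    then have "b N * r \<le> b N * (1/2)" using bnn by (intro mult_left_mono) auto
    then show ?thesis using eq by simp
  qed
  have "summable b"
  proof (rule summable_ratio_test[of "1/2" N0])
    fix N assume "N0 \<le> N"
    then show "norm (b (Suc N)) \<le> 1/2 * norm (b N)" using step bnn by simp
  qed simp
  then show ?thesis by (simp add: b_def)
qed

lemma main_part:
  fixes a c x :: complex
  assumes c_ok: "\<forall>m::nat. c \<noteq> - of_nat m"
  shows "(phi2_term a a c x (-x) has_sum phi2 a a c x (-x)) UNIV
       \<and> (hyp1F2_term a (c/2) (c/2 + 1/2) (x^2/4) sums phi2 a a c x (-x))"
proof -
  define t where "t = phi2_term a a c x (-x)"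
  define g where "g = (\<lambda>(N,n). t (n, N-n))"
  define S where "S = Sigma (UNIV::nat set) (\<lambda>N. {..N})"
  define A where "A = max (norm a) 1"
  define X where "X = norm x"
  have reidx: "(g has_sum s) S \<longleftrightarrow> (t has_sum s) UNIV" for s
    by (rule has_sum_reindex_bij_witness[of S "\<lambda>(n,k). (n+k,n)" "\<lambda>(N,n). (n,N-n)"])
       (auto simp: S_def g_def)
  have bsum: "summable (\<lambda>N. pochhammer A N * (2*X)^N / (fact N * norm (pochhammer c N)))"
    by (rule bound_summable[OF c_ok]) (auto simp: A_def X_def)
  have inner: "(\<Sum>n\<le>N. norm (g (N,n))) \<le> pochhammer A N * (2*X)^N / (fact N * norm (pochhammer c N))" for N
  proof -
    define K where "K = pochhammer A N * X^N / (fact N * norm (pochhammer c N))"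
    have "(\<Sum>n\<le>N. norm (g (N,n))) \<le> (\<Sum>n\<le>N. K * of_nat (N choose n))"
    proof (rule sum_mono)
      fix n assume "n \<in> {..N}"
      then have nN: "n + (N - n) = N" by simp
      show "norm (g (N,n)) \<le> K * of_nat (N choose n)"
        using term_bound[of a c x n "N-n"] unfolding nN
        by (simp add: g_def t_def K_def A_def X_def field_simps)
    qed
    also have "\<dots> = K * 2^N"
      by (simp add: sum_distrib_left[symmetric] of_nat_sum[symmetric] choose_row_sum)
    also have "\<dots> = pochhammer A N * (2*X)^N / (fact N * norm (pochhammer c N))"
      by (simp add: K_def power_mult_distrib)
    finally show ?thesis .
  qed
  have "(\<lambda>p. norm (g p)) summable_on S"
    unfolding S_def
  proof (rule Infinite_Sum.abs_summable_on_Sigma_iff[THEN iffD2], intro conjI ballI)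
    fix N :: nat
    show "(\<lambda>n. norm (g (N, n))) summable_on {..N}" by simp
  next
    have "summable (\<lambda>N. \<Sum>n\<le>N. norm (g (N,n)))"
      by (rule summable_comparison_test'[OF bsum, of 0]) (use inner in \<open>simp add: sum_nonneg\<close>)
    then have "(\<lambda>N. \<Sum>n\<le>N. norm (g (N,n))) summable_on UNIV"
      by (subst summable_on_UNIV_nonneg_real_iff) (auto simp: sum_nonneg)
    then show "(\<lambda>N. norm (\<Sum>\<^sub>\<infinity>n\<in>{..N}. norm (g (N, n)))) summable_on UNIV"
      by (simp add: sum_nonneg)
  qed
  then have "g summable_on S" by (rule abs_summable_summable)
  then have gsum: "(g has_sum infsum g S) S" by (rule has_sum_infsum)
  then have tsum: "(t has_sum infsum g S) UNIV" using reidx by simp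
  then have phi: "phi2 a a c x (-x) = infsum g S"
    unfolding phi2_def t_def[symmetric] by (simp add: infsumI)
  have part1: "(t has_sum phi2 a a c x (-x)) UNIV" using tsum phi by simp
  define h where "h = (\<lambda>N. \<Sum>n\<le>N. g (N,n))"
  have "(h has_sum infsum g S) UNIV"
    unfolding h_def using gsum unfolding S_def
    by (rule has_sum_Sigma') (simp add: has_sum_finite)
  then have hsums: "h sums phi2 a a c x (-x)" using phi by (simp add: has_sum_imp_sums)
  define w where "w = (\<lambda>N. \<Sum>i=0..N. (pochhammer a i / fact i) * ((-1)^(N-i) * pochhammer a (N-i) / fact (N-i)))"
  have hw: "h N = x^N / pochhammer c N * w N" for N
  proof -
    have "h N = (\<Sum>n=0..N. x^N / pochhammer c N * ((pochhammer a n / fact n) * ((-1)^(N-n) * pochhammer a (N-n) / fact (N-n))))"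
      unfolding h_def atLeast0AtMost[symmetric]
    proof (rule sum.cong)
      fix n assume "n \<in> {0..N}"
      then have nN: "n + (N - n) = N" by simp
      have xN: "x^N = x^n * x^(N-n)" using power_add[of x n "N-n"] nN by simp
      show "g (N,n) = x^N / pochhammer c N * ((pochhammer a n / fact n) * ((-1)^(N-n) * pochhammer a (N-n) / fact (N-n)))"
        unfolding xN g_def t_def phi2_term_def
        by (simp add: nN power_minus[of x] divide_inverse inverse_mult_distrib mult_ac)
    qed simp
    then show ?thesis by (simp add: w_def sum_distrib_left)
  qed
  have wev: "w (2*m) = pochhammer a m / fact m" and wodd: "w (2*m+1) = 0" for m
    using inner_identity[of a m] unfolding w_def by blast+
  have zero: "h n = 0" if "n \<notin> range (\<lambda>m::nat. 2*m)" for n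
  proof -
    have "odd n"
    proof
      assume "even n"
      then have "n = 2 * (n div 2)" by simp
      then show False using that by blast
    qed
    then obtain m where "n = 2*m+1" using oddE by blast
    then show ?thesis by (simp only: hw wodd mult_zero_right)
  qed
  have "(\<lambda>m. h (2*m)) sums phi2 a a c x (-x)"
    using hsums by (subst sums_mono_reindex[of "\<lambda>m. 2*m"]) (auto simp: strict_mono_def zero)
  moreover have "h (2*m) = hyp1F2_term a (c/2) (c/2 + 1/2) (x^2/4) m" for m
  proof -
    have pc: "pochhammer c (2*m) = 4^m * pochhammer (c/2) m * pochhammer (c/2 + 1/2) m"
      using pochhammer_double[of "c/2" m] by (simp add: power_mult)
    have "h (2*m) = (x^2)^m / (4^m * pochhammer (c/2) m * pochhammer (c/2 + 1/2) m) * (pochhammer a m / fact m)"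
      by (simp only: hw wev pc power_mult)
    also have "\<dots> = pochhammer a m / (pochhammer (c/2) m * pochhammer (c/2 + 1/2) m) * ((x^2)^m / 4^m) / fact m"
      by (simp only: divide_inverse inverse_mult_distrib mult_ac)
    also have "\<dots> = hyp1F2_term a (c/2) (c/2 + 1/2) (x^2/4) m"
      by (simp only: hyp1F2_term_def power_divide)
    finally show ?thesis .
  qed
  ultimately show ?thesis using part1 t_def by simp
qed


theorem mainTheorem3:
  fixes a c x :: complex
  assumes c_ok: "\<forall>m::nat. c \<noteq> - of_nat m"
  shows "(phi2_term a a c x (-x) has_sum phi2 a a c x (-x)) UNIV
       \<and> (hyp1F2_term a (c/2) (c/2 + 1/2) (x^2/4) sums phi2 a a c x (-x))
       \<and> ((\<forall>m::nat. 2 * a \<noteq> - of_nat m) \<longrightarrow>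
            (phi2_term a a (2*a) x (-x) has_sum phi2 a a (2*a) x (-x)) UNIV
          \<and> (hyp0F1_term (a + 1/2) (x^2/4) sums phi2 a a (2*a) x (-x)))"
proof (intro conjI impI)
  show "(phi2_term a a c x (-x) has_sum phi2 a a c x (-x)) UNIV"
    using main_part[OF c_ok] by blast
  show "hyp1F2_term a (c/2) (c/2 + 1/2) (x^2/4) sums phi2 a a c x (-x)"
    using main_part[OF c_ok] by blast
next
  assume a_ok: "\<forall>m::nat. 2 * a \<noteq> - of_nat m"
  note mp = main_part[OF a_ok, of a x]
  show "(phi2_term a a (2*a) x (-x) has_sum phi2 a a (2*a) x (-x)) UNIV"
    using mp by blast
  have eq: "hyp1F2_term a (2*a/2) (2*a/2 + 1/2) (x^2/4) k = hyp0F1_term (a + 1/2) (x^2/4) k" for k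
  proof -
    have "pochhammer a k \<noteq> 0"
    proof
      assume "pochhammer a k = 0"
      then obtain j where "a = - of_nat j" by (auto simp: pochhammer_eq_0_iff)
      then have "2 * a = - of_nat (2*j)" by simp
      then show False using a_ok by blast
    qed
    then show ?thesis by (simp add: hyp1F2_term_def hyp0F1_term_def)
  qed
  show "hyp0F1_term (a + 1/2) (x^2/4) sums phi2 a a (2*a) x (-x)"
  proof -
    have ef: "hyp1F2_term a a (a + 1/2) (x^2/4) = hyp0F1_term (a + 1/2) (x^2/4)"
      using eq by (intro ext) simp
    show ?thesis using mp unfolding ef[symmetric] by simp
  qed
qed

end
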